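(* Let $m\ge1$ and let $P_1\ge\dots\ge P_{2^m}>0$ be the probabilities of i.i.d. input words $\mathbf{w}_1,\dots,\mathbf{w}_{2^m}$, and $P_1^d\ge\dots\ge P^d_{2^m}>0$. After $t$ data words, let $\mathbf{n}^e(t)=(n_1^e(t),\dots,n^e_{2^m}(t))$ be the vector of counts of the input words, so that $$P(\mathbf{n}^e(t))=\binom{t}{n^e_1(t),\ldots,n^e_{2^m}(t)}P_1^{n^e_1(t)}\cdots P_{2^m}^{n^e_{2^m}(t)},$$ and assume the first $t$ words are encoded and decoded correctly, so the decoder counts equal $\mathbf{n}^e(t)$. Call a count vector stable if $n^e_1(t)>n^e_2(t)>\dots>n^e_{2^m}(t)$. For a stable count vector $\mathbf{n}$, with $N_i=n_i-n_{i+1}$, define $$A(\mathbf{n})=4-\prod_{i=1}^{2^{m-1}}\left(1-\left(\tfrac{P_{2i}}{P_{2i-1}}\right)^{N_{2i-1}}\right)-\prod_{i=1}^{2^{m-1}-1}\left(1-\left(\tfrac{P_{2i+1}}{P_{2i}}\right)^{N_{2i}}\right)-\prod_{i=1}^{2^{m-1}}\left(1-\left(\tfrac{P^d_{2i}}{P^d_{2i-1}}\right)^{N_{2i-1}}\right)-\prod_{i=1}^{2^{m-1}-1}\left(1-\left(\tfrac{P^d_{2i+1}}{P^d_{2i}}\right)^{N_{2i}}\right).$$ Assume that, conditioned on a stable count vector $\mathbf{n}^e(t)=\mathbf{n}$, the probability that a recurrence (two adjacent encoder counts, or two adjacent decoder counts, becoming equal at some future time) occurs is at most $A(\mathbf{n})$.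 Let $P(t)$ be the probability that the dictionary will be unstable, i.e. that $\mathbf{n}^e(t)$ is not stable or a recurrence occurs after time $t$. Then $$P(t)\le\sum_{\mathbf{n}^e(t)\ \text{stable}}A(\mathbf{n}^e(t))P(\mathbf{n}^e(t))+\sum_{\mathbf{n}^e(t)\ \text{not stable}}P(\mathbf{n}^e(t)).$$
   Context: Setting: a rate-1 SLC direct shaping code with parsing length $m$: the encoder keeps the $2^m$ input words ordered by their occurrence counts and maps the word in position $k$ to the $k$th output codeword of a fixed list ordered by nondecreasing cost (number of zeros); the decoder rebuilds the same ordering from the decoded words. Codewords pass through a binary symmetric channel with crossover probability $\rho$, and $P_i^d=\sum_j\rho^{d(i,j)}(1-\rho)^{m-d(i,j)}P_j$ with $d$ the Hamming distance. The conditional bound by $A(\mathbf{n})$ is the paper's Lemma on recurrence of a stable dictionary, stated here as a hypothesis. *)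

theory Defs
  imports "HOL-Probability.Probability"
begin

text \<open>Words are indexed by 1..K with K = 2^m. A count vector is a function
  nat => nat supported on 1..K.\<close>

definition count_vectors :: "nat \<Rightarrow> nat \<Rightarrow> (nat \<Rightarrow> nat) set" where
  "count_vectors K t = {n. (\<forall>i. i \<notin> {1..K} \<longrightarrow> n i = 0) \<and> (\<Sum>i=1..K. n i) = t}"

definition stable :: "nat \<Rightarrow> (nat \<Rightarrow> nat) \<Rightarrow> bool" where
  "stable K n \<longleftrightarrow> (\<forall>i\<in>{1..<K}. n i > n (Suc i))"

definition multinom_prob :: "nat \<Rightarrow> (nat \<Rightarrow> real) \<Rightarrow> nat \<Rightarrow> (nat \<Rightarrow> nat) \<Rightarrow> real" where
  "multinom_prob K P t n =
     fact t / (\<Prod>i=1..K. fact (n i)) * (\<Prod>i=1..K. P i ^ n i)"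

definition word_counts :: "nat \<Rightarrow> nat \<Rightarrow> (nat \<Rightarrow> 'a \<Rightarrow> nat) \<Rightarrow> 'a \<Rightarrow> nat \<Rightarrow> nat" where
  "word_counts K t W \<omega> = (\<lambda>i. if i \<in> {1..K} then card {s. s < t \<and> W s \<omega> = i} else 0)"

definition A_bound :: "nat \<Rightarrow> (nat \<Rightarrow> real) \<Rightarrow> (nat \<Rightarrow> real) \<Rightarrow> (nat \<Rightarrow> nat) \<Rightarrow> real" where
  "A_bound m P Pd n =
    (let N = (\<lambda>i. n i - n (Suc i)) in
     4 - (\<Prod>i=1..2^(m-1). 1 - (P (2*i) / P (2*i-1)) ^ N (2*i-1))
       - (\<Prod>i=1..2^(m-1)-1. 1 - (P (2*i+1) / P (2*i)) ^ N (2*i))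
       - (\<Prod>i=1..2^(m-1). 1 - (Pd (2*i) / Pd (2*i-1)) ^ N (2*i-1))
       - (\<Prod>i=1..2^(m-1)-1. 1 - (Pd (2*i+1) / Pd (2*i)) ^ N (2*i)))"

definition hamming :: "bool list \<Rightarrow> bool list \<Rightarrow> nat" where
  "hamming u v = card {k. k < length u \<and> u ! k \<noteq> v ! k}"

end

theory Submission imports Defs "HOL-Combinatorics.Multiset_Permutations" begin

lemma prod_nth_list: "(\<Prod>s<length ws. f (ws!s)) = prod_list (map f ws)"
  by (induction ws) (simp_all add: prod.lessThan_Suc_shift del: prod.lessThan_Suc)

lemma prod_list_count:
  fixes f :: "'a \<Rightarrow> 'b::comm_monoid_mult"
  assumes "finite A" shows "set ws \<subseteq> A \<Longrightarrow> prod_list (map f ws) = (\<Prod>i\<in>A. f i ^ count_list ws i)"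
proof (induction ws)
  case Nil then show ?case by simp
next
  case (Cons x ws)
  have "(\<Prod>i\<in>A. f i ^ count_list (x#ws) i) = (\<Prod>i\<in>A. f i ^ count_list ws i * (if x = i then f i else 1))"
    by (intro prod.cong) (auto simp del: power_Suc simp add: power_Suc2)
  also have "\<dots> = (\<Prod>i\<in>A. f i ^ count_list ws i) * f x"
    using Cons.prems assms by (simp add: prod.distrib prod.delta)
  finally show ?case using Cons by (simp add: mult_ac)
qed

lemma sum_lists:
  fixes f :: "'a \<Rightarrow> 'b::comm_semiring_1"
  assumes "finite A"
  shows "(\<Sum>ws\<in>{ws. set ws \<subseteq> A \<and> length ws = t}. prod_list (map f ws)) = (sum f A)^t"
proof (induction t)
  case 0
  have "{ws. set ws \<subseteq> A \<and> length ws = 0} = {[]}" by auto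
  then show ?case by simp
next
  case (Suc t)
  have eq: "{ws. set ws \<subseteq> A \<and> length ws = Suc t} = (\<lambda>(a,ws). a#ws) ` (A \<times> {ws. set ws \<subseteq> A \<and> length ws = t})"
    by (auto simp: length_Suc_conv image_iff)
  have inj: "inj_on (\<lambda>(a,ws). a#ws) (A \<times> {ws. set ws \<subseteq> A \<and> length ws = t})"
    by (auto simp: inj_on_def)
  have "(\<Sum>ws\<in>{ws. set ws \<subseteq> A \<and> length ws = Suc t}. prod_list (map f ws))
     = (\<Sum>(a,ws)\<in>A \<times> {ws. set ws \<subseteq> A \<and> length ws = t}. f a * prod_list (map f ws))"
    unfolding eq by (subst sum.reindex[OF inj]) (auto intro!: sum.cong split: prod.splits)
  also have "\<dots> = (\<Sum>a\<in>A. \<Sum>ws\<in>{ws. set ws \<subseteq> A \<and> length ws = t}. f a * prod_list (map f ws))"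
    by (subst sum.cartesian_product) simp
  also have "\<dots> = (\<Sum>a\<in>A. f a * (sum f A)^t)"
    by (simp add: sum_distrib_left[symmetric] Suc)
  also have "\<dots> = (sum f A)^Suc t" by (simp add: sum_distrib_right)
  finally show ?case .
qed

theorem theorem3:
  fixes M :: "'a measure"
    and m t :: nat
    and P Pd :: "nat \<Rightarrow> real"
    and \<rho> :: real
    and cw :: "nat \<Rightarrow> bool list"
    and W :: "nat \<Rightarrow> 'a \<Rightarrow> nat"
    and R :: "'a \<Rightarrow> bool"
  assumes "prob_space M"
    and "m \<ge> 1"
    and P_pos: "\<forall>i\<in>{1..2^m}. P i > 0"
    and P_dec: "\<forall>i\<in>{1..<2^m}. P i \<ge> P (Suc i)"
    and P_sum: "(\<Sum>i=1..2^m. P i) = 1"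
    and cw_len: "\<forall>i\<in>{1..2^m}. length (cw i) = m"
    and cw_inj: "inj_on cw {1..2^m}"
    and rho: "0 \<le> \<rho>" "\<rho> \<le> 1"
    and Pd_def: "\<forall>i\<in>{1..2^m}. Pd i =
           (\<Sum>j=1..2^m. \<rho> ^ hamming (cw i) (cw j) * (1 - \<rho>) ^ (m - hamming (cw i) (cw j)) * P j)"
    and Pd_pos: "\<forall>i\<in>{1..2^m}. Pd i > 0"
    and Pd_dec: "\<forall>i\<in>{1..<2^m}. Pd i \<ge> Pd (Suc i)"
    and W_meas: "\<forall>s. W s \<in> measurable M (count_space UNIV)"
    and W_iid: "\<forall>ws. length ws = t \<longrightarrow>
           prob_space.prob M {\<omega> \<in> space M. \<forall>s<t. W s \<omega> = ws ! s} = (\<Prod>s<t. P (ws ! s))"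
    and R_meas: "{\<omega> \<in> space M. R \<omega>} \<in> sets M"
    and recurrence_bound: "\<forall>n\<in>count_vectors (2^m) t. stable (2^m) n \<longrightarrow>
           prob_space.prob M {\<omega> \<in> space M. word_counts (2^m) t W \<omega> = n} > 0 \<longrightarrow>
           cond_prob M R (\<lambda>\<omega>. word_counts (2^m) t W \<omega> = n) \<le> A_bound m P Pd n"
  shows "prob_space.prob M {\<omega> \<in> space M. \<not> stable (2^m) (word_counts (2^m) t W \<omega>) \<or> R \<omega>}
         \<le> (\<Sum>n\<in>{n\<in>count_vectors (2^m) t. stable (2^m) n}. A_bound m P Pd n * multinom_prob (2^m) P t n)
           + (\<Sum>n\<in>{n\<in>count_vectors (2^m) t. \<not> stable (2^m) n}. multinom_prob (2^m) P t n)"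
proof -
  interpret prob_space M by fact
  define K where "K = (2::nat)^m"
  define wl where "wl = (\<lambda>\<omega>. map (\<lambda>s. W s \<omega>) [0..<t])"
  define wc where "wc = word_counts K t W"
  define cv where "cv = count_vectors K t"
  define Lt where "Lt = {ws. set ws \<subseteq> {1..K} \<and> length ws = t}"
  have Wm[measurable]: "\<And>s. W s \<in> measurable M (count_space UNIV)" using W_meas by blast
  have Em: "{\<omega>\<in>space M. \<forall>s<t. W s \<omega> = c s} \<in> events" for c :: "nat \<Rightarrow> nat"
    by measurable
  have wl_eq: "wl \<omega> = ws \<longleftrightarrow> (\<forall>s<t. W s \<omega> = ws!s)" if "length ws = t" for ws \<omega>
    using that unfolding wl_def by (auto simp: list_eq_iff_nth_eq)
  have probS: "{\<omega>\<in>space M. wl \<omega> \<in> S} \<in> events \<and>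
      prob {\<omega>\<in>space M. wl \<omega> \<in> S} = (\<Sum>ws\<in>S. prod_list (map P ws))"
    if S: "finite S" "\<And>ws. ws \<in> S \<Longrightarrow> length ws = t" for S
  proof -
    define E where "E ws = {\<omega>\<in>space M. wl \<omega> = ws}" for ws
    have E_alt: "E ws = {\<omega>\<in>space M. \<forall>s<t. W s \<omega> = ws!s}" if "ws \<in> S" for ws
      unfolding E_def using wl_eq[of ws] S(2)[OF that] by simp
    have eq: "{\<omega>\<in>space M. wl \<omega> \<in> S} = (\<Union>ws\<in>S. E ws)"
      unfolding E_def by auto
    have EE: "E ` S \<subseteq> events" using Em E_alt by auto
    have disj: "disjoint_family_on E S"
      unfolding disjoint_family_on_def E_def by auto
    have "prob (\<Union>ws\<in>S. E ws) = (\<Sum>ws\<in>S. prob (E ws))"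
      by (rule finite_measure_finite_Union[OF S(1) EE disj])
    also have "\<dots> = (\<Sum>ws\<in>S. prod_list (map P ws))"
    proof (rule sum.cong)
      fix ws assume "ws \<in> S"
      then have "length ws = t" using S(2) by auto
      then show "prob (E ws) = prod_list (map P ws)"
        using W_iid prod_nth_list[of P ws] E_alt[OF \<open>ws \<in> S\<close>] by auto
    qed simp
    finally show ?thesis using eq EE by auto
  qed
  have finLt: "finite Lt" unfolding Lt_def by (rule finite_lists_length_eq) simp
  define G where "G = {\<omega>\<in>space M. wl \<omega> \<in> Lt}"
  have G_ev: "G \<in> events" and probG: "prob G = 1"
  proof -
    have "G \<in> events \<and> prob G = (\<Sum>ws\<in>Lt. prod_list (map P ws))"
      unfolding G_def by (rule probS[OF finLt]) (auto simp: Lt_def)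
    moreover have "(\<Sum>ws\<in>Lt. prod_list (map P ws)) = 1"
      unfolding Lt_def using sum_lists[of "{1..K}" P t] P_sum by (simp add: K_def)
    ultimately show "G \<in> events" "prob G = 1" by auto
  qed
  have wc_G: "wc \<omega> = count_list (wl \<omega>)" if "set (wl \<omega>) \<subseteq> {1..K}" for \<omega>
  proof
    fix i
    show "wc \<omega> i = count_list (wl \<omega>) i"
    proof (cases "i \<in> {1..K}")
      case True
      have "count_list (wl \<omega>) i = card {s. s < length (wl \<omega>) \<and> i = wl \<omega> ! s}"
        by (simp add: count_list_eq_length_filter length_filter_conv_card)
      also have "{s. s < length (wl \<omega>) \<and> i = wl \<omega> ! s} = {s. s < t \<and> W s \<omega> = i}"
        by (auto simp: wl_def)
      finally show ?thesis using True by (simp add: wc_def word_counts_def)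
    next
      case False
      then have "i \<notin> set (wl \<omega>)" using that by auto
      then show ?thesis using False by (auto simp add: wc_def word_counts_def)
    qed
  qed
  have cl_cv: "count_list ws \<in> cv" if "set ws \<subseteq> {1..K}" "length ws = t" for ws
    using that sum_count_set[of ws "{1..K}"] unfolding cv_def count_vectors_def
    by (auto intro: count_notin)
  have cv_G: "set (wl \<omega>) \<subseteq> {1..K}" if "wc \<omega> \<in> cv" for \<omega>
  proof -
    define T where "T = {s\<in>{..<t}. W s \<omega> \<in> {1..K}}"
    have "(\<Sum>i\<in>{1..K}. wc \<omega> i) = t" using that by (simp add: cv_def count_vectors_def)
    moreover have "(\<Sum>i\<in>{1..K}. wc \<omega> i) = (\<Sum>i\<in>{1..K}. card {s\<in>T. W s \<omega> = i})"
      by (intro sum.cong) (auto simp: wc_def word_counts_def T_def intro!: arg_cong[where f=card])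
    moreover have "(\<Sum>i\<in>{1..K}. card {s\<in>T. W s \<omega> = i}) = card T"
    proof -
      have img: "(\<lambda>s. W s \<omega>) ` T \<subseteq> {1..K}" by (auto simp: T_def)
      have fT: "finite T" by (simp add: T_def)
      show ?thesis using sum.group[OF fT _ img, of "\<lambda>_. 1::nat"] by simp
    qed
    ultimately have "card T = card {..<t}" by simp
    moreover have "T \<subseteq> {..<t}" by (auto simp: T_def)
    ultimately have "T = {..<t}" using card_subset_eq[of "{..<t}" T] by blast
    then have "\<forall>s<t. W s \<omega> \<in> {1..K}" unfolding T_def by blast
    then show ?thesis unfolding wl_def by auto
  qed
  define S where "S n = {ws\<in>Lt. count_list ws = n}" for n
  define C where "C n = {\<omega>\<in>space M. wc \<omega> = n}" for n
  have C_eq: "C n = {\<omega>\<in>space M. wl \<omega> \<in> S n}" if "n \<in> cv" for n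
  proof -
    have "wl \<omega> \<in> S n \<longleftrightarrow> wc \<omega> = n" for \<omega>
    proof
      assume "wl \<omega> \<in> S n" then show "wc \<omega> = n" using wc_G by (auto simp: S_def Lt_def)
    next
      assume a: "wc \<omega> = n"
      then have "set (wl \<omega>) \<subseteq> {1..K}" using cv_G that by auto
      then show "wl \<omega> \<in> S n" using a wc_G by (auto simp: S_def Lt_def wl_def)
    qed
    then show ?thesis unfolding C_def by auto
  qed
  define Mn where "Mn n = (\<Sum>i\<in>{1..K}. replicate_mset (n i) i)" for n :: "nat \<Rightarrow> nat"
  have cMn: "count (Mn n) = n" if "n \<in> cv" for n
    using that by (auto simp: Mn_def count_sum cv_def count_vectors_def fun_eq_iff)
  have sMn: "size (Mn n) = t" if "n \<in> cv" for n
    using that by (simp add: Mn_def cv_def count_vectors_def)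
  have S_perm: "S n = permutations_of_multiset (Mn n)" if n: "n \<in> cv" for n
  proof (intro set_eqI iffI)
    fix ws assume "ws \<in> S n"
    then have "count (mset ws) = count (Mn n)" using cMn[OF n] by (auto simp: S_def count_mset)
    then show "ws \<in> permutations_of_multiset (Mn n)"
      by (simp add: permutations_of_multiset_def multiset_eq_iff fun_eq_iff)
  next
    fix ws assume "ws \<in> permutations_of_multiset (Mn n)"
    then have ms: "mset ws = Mn n" by (simp add: permutations_of_multiset_def)
    have "count_list ws = n" using ms cMn[OF n] by (metis count_mset ext)
    moreover have "length ws = t" using ms sMn[OF n] by (metis size_mset)
    moreover have "set ws \<subseteq> {1..K}"
    proof
      fix x assume "x \<in> set ws"
      then have "count (Mn n) x > 0" using ms by (metis count_greater_zero_iff set_mset_mset)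
      then have "n x \<noteq> 0" using cMn[OF n] by simp
      then show "x \<in> {1..K}" using n unfolding cv_def count_vectors_def by auto
    qed
    ultimately show "ws \<in> S n" by (simp add: S_def Lt_def)
  qed
  have finS: "finite (S n)" for n using finLt unfolding S_def by auto
  have probC: "C n \<in> events \<and> prob (C n) = multinom_prob K P t n" if n: "n \<in> cv" for n
  proof -
    have ev: "C n \<in> events \<and> prob (C n) = (\<Sum>ws\<in>S n. prod_list (map P ws))"
      unfolding C_eq[OF n] by (rule probS[OF finS]) (auto simp: S_def Lt_def)
    have "(\<Sum>ws\<in>S n. prod_list (map P ws)) = (\<Sum>ws\<in>S n. (\<Prod>i=1..K. P i ^ n i))"
    proof (rule sum.cong)
      fix ws assume "ws \<in> S n"
      then show "prod_list (map P ws) = (\<Prod>i=1..K. P i ^ n i)"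
        using prod_list_count[of "{1..K}" ws P] by (auto simp: S_def Lt_def)
    qed simp
    also have "\<dots> = real (card (S n)) * (\<Prod>i=1..K. P i ^ n i)" by simp
    also have "real (card (S n)) = fact t / (\<Prod>i=1..K. fact (n i))"
    proof -
      have A: "card (S n) * (\<Prod>x\<in>set_mset (Mn n). fact (n x)) = fact t"
        using card_permutations_of_multiset_aux[of "Mn n"] unfolding S_perm[OF n] cMn[OF n] sMn[OF n] .
      have sub: "set_mset (Mn n) \<subseteq> {1..K}"
      proof
        fix x assume "x \<in># Mn n"
        then have "n x \<noteq> 0" using cMn[OF n] by (metis count_eq_zero_iff)
        then show "x \<in> {1..K}" using n unfolding cv_def count_vectors_def by auto
      qed
      have B: "(\<Prod>x\<in>set_mset (Mn n). fact (n x)) = (\<Prod>x\<in>{1..K}. fact (n x) :: nat)"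
        by (rule prod.mono_neutral_left) (use sub cMn[OF n] in \<open>auto simp: count_eq_zero_iff[symmetric]\<close>)
      have "real (card (S n)) * real (\<Prod>x\<in>{1..K}. fact (n x) :: nat) = fact t"
        using A B by (metis of_nat_fact of_nat_mult)
      moreover have "real (\<Prod>x\<in>{1..K}. fact (n x) :: nat) = (\<Prod>x\<in>{1..K}. fact (n x))"
        by (simp add: of_nat_prod)
      moreover have "(\<Prod>x\<in>{1..K}. fact (n x) :: real) \<noteq> 0" by simp
      ultimately show ?thesis by (simp add: field_simps)
    qed
    finally show ?thesis using ev unfolding multinom_prob_def by simp
  qed
  define B where "B n = {\<omega>\<in>space M. wc \<omega> = n \<and> (\<not> stable K n \<or> R \<omega>)}" for n
  have B_eq: "B n = (if stable K n then C n \<inter> {\<omega>\<in>space M. R \<omega>} else C n)" for n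
    by (auto simp: B_def C_def)
  have B_ev: "B n \<in> events" if "n \<in> cv" for n
    using probC[OF that] R_meas unfolding B_eq by auto
  have fincv: "finite cv"
  proof (rule finite_subset)
    show "cv \<subseteq> {f. \<forall>x. (x \<in> {1..K} \<longrightarrow> f x \<in> {0..t}) \<and> (x \<notin> {1..K} \<longrightarrow> f x = 0)}"
    proof safe
      fix f x assume f: "f \<in> cv" and x: "x \<in> {1..K}"
      have "f x \<le> (\<Sum>i\<in>{1..K}. f i)" using x by (intro member_le_sum) auto
      then show "f x \<in> {0..t}" using f by (simp add: cv_def count_vectors_def)
    qed (auto simp: cv_def count_vectors_def)
  qed (rule finite_set_of_finite_funs; simp)
  define Bad where "Bad = {\<omega>\<in>space M. \<not> stable K (wc \<omega>) \<or> R \<omega>}"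
  have "Bad \<subseteq> (\<Union>n\<in>cv. B n) \<union> (space M - G)"
  proof
    fix \<omega> assume w: "\<omega> \<in> Bad"
    show "\<omega> \<in> (\<Union>n\<in>cv. B n) \<union> (space M - G)"
    proof (cases "\<omega> \<in> G")
      case True
      then have "wc \<omega> \<in> cv" using wc_G cl_cv by (auto simp: G_def Lt_def)
      then show ?thesis using w by (auto simp: B_def Bad_def)
    qed (use w in \<open>auto simp: Bad_def\<close>)
  qed
  have UBev: "(\<Union>n\<in>cv. B n) \<in> events" using B_ev fincv by auto
  have s1: "prob Bad \<le> prob ((\<Union>n\<in>cv. B n) \<union> (space M - G))"
    by (rule finite_measure_mono) (use \<open>Bad \<subseteq> _\<close> UBev G_ev in auto)
  have s2: "prob ((\<Union>n\<in>cv. B n) \<union> (space M - G)) \<le> prob (\<Union>n\<in>cv. B n) + prob (space M - G)"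
    by (rule measure_subadditive) (use UBev G_ev in auto)
  have s3: "prob (space M - G) = 0" using prob_compl[OF G_ev] probG by simp
  have s4: "prob (\<Union>n\<in>cv. B n) \<le> (\<Sum>n\<in>cv. prob (B n))"
    by (rule finite_measure_subadditive_finite) (use fincv B_ev in auto)
  have s5: "(\<Sum>n\<in>cv. prob (B n)) = (\<Sum>n\<in>{n\<in>cv. stable K n}. prob (B n)) + (\<Sum>n\<in>{n\<in>cv. \<not> stable K n}. prob (B n))"
  proof -
    have e: "{n\<in>cv. stable K n} \<union> {n\<in>cv. \<not> stable K n} = cv" by auto
    have "(\<Sum>n\<in>{n\<in>cv. stable K n} \<union> {n\<in>cv. \<not> stable K n}. prob (B n)) = (\<Sum>n\<in>{n\<in>cv. stable K n}. prob (B n)) + (\<Sum>n\<in>{n\<in>cv. \<not> stable K n}. prob (B n))"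
      by (rule sum.union_disjoint) (use fincv in auto)
    then show ?thesis unfolding e .
  qed
  have s6: "(\<Sum>n\<in>{n\<in>cv. stable K n}. prob (B n)) + (\<Sum>n\<in>{n\<in>cv. \<not> stable K n}. prob (B n)) \<le> (\<Sum>n\<in>{n\<in>cv. stable K n}. A_bound m P Pd n * multinom_prob K P t n)
      + (\<Sum>n\<in>{n\<in>cv. \<not> stable K n}. multinom_prob K P t n)"
  proof (rule add_mono; rule sum_mono)
    fix n assume "n \<in> {n\<in>cv. \<not> stable K n}"
    then show "prob (B n) \<le> multinom_prob K P t n" using probC B_eq by auto
  next
    fix n assume n: "n \<in> {n\<in>cv. stable K n}"
    then have Bn: "B n = {\<omega>\<in>space M. R \<omega> \<and> wc \<omega> = n}" by (auto simp: B_def)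
    have pc: "prob (C n) = multinom_prob K P t n" "C n \<in> events" using probC n by auto
    show "prob (B n) \<le> A_bound m P Pd n * multinom_prob K P t n"
    proof (cases "prob (C n) > 0")
      case True
      have "cond_prob M R (\<lambda>\<omega>. wc \<omega> = n) \<le> A_bound m P Pd n"
        using recurrence_bound True n unfolding K_def wc_def cv_def C_def by auto
      then have "prob (B n) / prob (C n) \<le> A_bound m P Pd n"
        unfolding cond_prob_def Bn C_def by simp
      then show ?thesis using True pc by (simp add: divide_le_eq mult.commute)
    next
      case False
      then have "prob (C n) = 0" using measure_nonneg[of M "C n"] by linarith
      moreover have "prob (B n) \<le> prob (C n)"
        using pc(2) by (intro finite_measure_mono) (auto simp: B_def C_def)
      ultimately show ?thesis using pc by simp
    qed
  qed
  have "prob Bad \<le> (\<Sum>n\<in>{n\<in>cv. stable K n}. A_bound m P Pd n * multinom_prob K P t n)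
      + (\<Sum>n\<in>{n\<in>cv. \<not> stable K n}. multinom_prob K P t n)"
    using s1 s2 s3 s4 s5 s6 by linarith
  then show ?thesis unfolding Bad_def K_def wc_def cv_def .
qed

end
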